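(* Let $R,r>0$ and let $K^{-1/2}_0$ and $\{\mathbb{E}(t)\}_{t\in[-1/2,1/2]}$ be as in the context (touching disks). Then $\{\mathbb{E}(t)\}$ is a resolution of the identity on $K^{-1/2}_0$; namely, $$\langle f,g\rangle_{-1/2}=\int_{-1/2}^{1/2}d\langle f,\mathbb{E}(t)g\rangle_{-1/2}\quad\text{for all } f,g\in K^{-1/2}_0.$$ Moreover, $\lim_{t\to s}\mathbb{E}(t)=\mathbb{E}(s)$ for all $s\in[-1/2,1/2]$ (strongly).
   Context: Identify $\mathbb{R}^2$ with $\mathbb{C}$; for $a\in\mathbb{R}\setminus\{0\}$ let $B_a$ be the open disk of radius $|a|$ centered at $(a,0)$. Fix $R,r>0$, $\Omega=B_R\cup B_{-r}$, $q_1=\frac1{2r}+\frac1{2R}$. For $k\neq0$ let $\mathbb{S}(k)=\frac{1}{2|k|}\mathrm{diag}(1-e^{-|k|q_1},\,1+e^{-|k|q_1})$. $K^{-1/2}_0$ is the Hilbert space of pairs $\hat\varphi=(\hat\varphi_1,\hat\varphi_2)^T$ of measurable complex functions on $\mathbb{R}$ (mod a.e.) with $\int_{\mathbb{R}}\hat\varphi^T\mathbb{S}\overline{\hat\varphi}\,dk<\infty$, inner product $\langle\psi,\varphi\rangle_{-1/2}=\int_{\mathbb{R}}\hat\psi^T\mathbb{S}\overline{\hat\varphi}\,dk$ (in the paper such a pair represents a boundary density on $\partial\Omega$ after pulling back by $z\mapsto1/z$, Fourier transforming and applying $P=\frac1{\sqrt2}\begin{bmatrix}-1&1\\1&1\end{bmatrix}$).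 For $s\in\mathbb{R}\cup\{\infty\}$ let $\mathcal{P}^1(s)(\hat\varphi_1,\hat\varphi_2)=(\chi_{(-\infty,s]}\hat\varphi_1,0)$, $\mathcal{P}^2(s)(\hat\varphi_1,\hat\varphi_2)=(0,\chi_{(-\infty,s]}\hat\varphi_2)$ (with $\chi_{(-\infty,\infty]}\equiv1$), $\mathbb{I}=\mathcal{P}^1(\infty)+\mathcal{P}^2(\infty)$, and $$\mathbb{E}(t)=\begin{cases}\mathcal{P}^2\!\left(-\frac{\ln(-2t)}{q_1}\right)-\mathcal{P}^2\!\left(\frac{\ln(-2t)}{q_1}\right),& t\in[-1/2,0),\\[2pt]\mathcal{P}^1\!\left(\frac{\ln(2t)}{q_1}\right)-\mathcal{P}^1\!\left(-\frac{\ln(2t)}{q_1}\right)+\mathbb{I},& t\in(0,1/2],\end{cases}\qquad \mathbb{E}(0)=\lim_{t\to0^+}\mathbb{E}(t).$$ A resolution of the identity means: each $\mathbb{E}(t)$ is an orthogonal projection, $\mathbb{E}(t)\mathbb{E}(s)=\mathbb{E}(\min(t,s))$, $\mathbb{E}$ is right-continuous, $\mathbb{E}(-1/2)=0$, $\mathbb{E}(1/2)=\mathbb{I}$. *)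

theory Defs
  imports "HOL-Analysis.Analysis"
begin

text \<open>A pair of (representatives of) functions on the Fourier side: (phi_1, phi_2).\<close>
type_synonym dens = "(real \<Rightarrow> complex) \<times> (real \<Rightarrow> complex)"

definition q1 :: "real \<Rightarrow> real \<Rightarrow> real" where
  "q1 R r = 1 / (2 * r) + 1 / (2 * R)"

text \<open>Diagonal entries of the weight matrix S(k) (k \<noteq> 0; the value at k = 0 is irrelevant, a null set).\<close>
definition S1 :: "real \<Rightarrow> real \<Rightarrow> real" where
  "S1 q k = (1 - exp (- \<bar>k\<bar> * q)) / (2 * \<bar>k\<bar>)"

definition S2 :: "real \<Rightarrow> real \<Rightarrow> real" where
  "S2 q k = (1 + exp (- \<bar>k\<bar> * q)) / (2 * \<bar>k\<bar>)"

definition inK :: "real \<Rightarrow> dens \<Rightarrow> bool" where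
  "inK q \<phi> \<longleftrightarrow> fst \<phi> \<in> borel_measurable lborel \<and> snd \<phi> \<in> borel_measurable lborel \<and>
     integrable lborel (\<lambda>k. S1 q k * (cmod (fst \<phi> k))\<^sup>2 + S2 q k * (cmod (snd \<phi> k))\<^sup>2)"

definition Kinner :: "real \<Rightarrow> dens \<Rightarrow> dens \<Rightarrow> complex" where
  "Kinner q \<psi> \<phi> = (LINT k|lborel. complex_of_real (S1 q k) * fst \<psi> k * cnj (fst \<phi> k)
                                  + complex_of_real (S2 q k) * snd \<psi> k * cnj (snd \<phi> k))"

definition Knorm :: "real \<Rightarrow> dens \<Rightarrow> real" where
  "Knorm q \<phi> = sqrt (Re (Kinner q \<phi> \<phi>))"

text \<open>Equality in K^{-1/2}_0 (elements are taken modulo a.e. equality).\<close>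
definition Keq :: "dens \<Rightarrow> dens \<Rightarrow> bool" where
  "Keq \<psi> \<phi> \<longleftrightarrow> (AE k in lborel. fst \<psi> k = fst \<phi> k \<and> snd \<psi> k = snd \<phi> k)"

definition dzero :: dens where "dzero = (\<lambda>k. 0, \<lambda>k. 0)"

definition dadd :: "dens \<Rightarrow> dens \<Rightarrow> dens" where
  "dadd \<psi> \<phi> = (\<lambda>k. fst \<psi> k + fst \<phi> k, \<lambda>k. snd \<psi> k + snd \<phi> k)"

definition dsub :: "dens \<Rightarrow> dens \<Rightarrow> dens" where
  "dsub \<psi> \<phi> = (\<lambda>k. fst \<psi> k - fst \<phi> k, \<lambda>k. snd \<psi> k - snd \<phi> k)"

definition dscale :: "complex \<Rightarrow> dens \<Rightarrow> dens" where
  "dscale a \<phi> = (\<lambda>k. a * fst \<phi> k, \<lambda>k. a * snd \<phi> k)"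

definition opadd :: "(dens \<Rightarrow> dens) \<Rightarrow> (dens \<Rightarrow> dens) \<Rightarrow> dens \<Rightarrow> dens" where
  "opadd A B \<phi> = dadd (A \<phi>) (B \<phi>)"

definition opsub :: "(dens \<Rightarrow> dens) \<Rightarrow> (dens \<Rightarrow> dens) \<Rightarrow> dens \<Rightarrow> dens" where
  "opsub A B \<phi> = dsub (A \<phi>) (B \<phi>)"

text \<open>P^1(s), P^2(s) for s in R \<union> {\<infinity>} (extended reals; chi_{(-\<infinity>,\<infinity>]} = 1).\<close>
definition P1 :: "ereal \<Rightarrow> dens \<Rightarrow> dens" where
  "P1 s \<phi> = (\<lambda>k. if ereal k \<le> s then fst \<phi> k else 0, \<lambda>k. 0)"

definition P2 :: "ereal \<Rightarrow> dens \<Rightarrow> dens" where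
  "P2 s \<phi> = (\<lambda>k. 0, \<lambda>k. if ereal k \<le> s then snd \<phi> k else 0)"

definition Iop :: "dens \<Rightarrow> dens" where
  "Iop = opadd (P1 \<infinity>) (P2 \<infinity>)"

text \<open>The family E(t); at t = 0 the value is the (strong) limit t \<rightarrow> 0+, which is P^2(\<infinity>).\<close>
definition Efam :: "real \<Rightarrow> real \<Rightarrow> dens \<Rightarrow> dens" where
  "Efam q t =
    (if t < 0 then opsub (P2 (ereal (- ln (- 2 * t) / q))) (P2 (ereal (ln (- 2 * t) / q)))
     else if 0 < t then opadd (opsub (P1 (ereal (ln (2 * t) / q))) (P1 (ereal (- ln (2 * t) / q)))) Iop
     else P2 \<infinity>)"

definition RS_has_integral :: "(real \<Rightarrow> complex) \<Rightarrow> (real \<Rightarrow> complex) \<Rightarrow> real \<Rightarrow> real \<Rightarrow> complex \<Rightarrow> bool" where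
  "RS_has_integral h F a b I \<longleftrightarrow>
    (\<forall>\<epsilon>>0. \<exists>\<delta>>0. \<forall>(n::nat) (x::nat \<Rightarrow> real) (\<xi>::nat \<Rightarrow> real).
       x 0 = a \<and> x n = b \<and>
       (\<forall>i<n. x i < x (Suc i) \<and> x (Suc i) - x i < \<delta> \<and> x i \<le> \<xi> i \<and> \<xi> i \<le> x (Suc i)) \<longrightarrow>
       cmod ((\<Sum>i<n. h (\<xi> i) * (F (x (Suc i)) - F (x i))) - I) < \<epsilon>)"

end

theory Submission
  imports Defs
begin

definition EA :: "real \<Rightarrow> real \<Rightarrow> real \<Rightarrow> bool" where
  "EA q t k \<longleftrightarrow> exp (q*k) \<le> 2*t \<or> exp (-(q*k)) < 2*t"
definition EB :: "real \<Rightarrow> real \<Rightarrow> real \<Rightarrow> bool" where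
  "EB q t k \<longleftrightarrow> -2*t < exp (q*k) \<and> -2*t \<le> exp (-(q*k))"

lemma q_pos: "R > 0 \<Longrightarrow> r > 0 \<Longrightarrow> q1 R r > 0"
  unfolding q1_def by (simp add: add_pos_pos)

lemma L1: fixes c q k :: real assumes c: "0 < c" and q: "0 < q" shows "ln c / q < k \<longleftrightarrow> c < exp (q*k)"
proof -
  have "ln c / q < k \<longleftrightarrow> ln c < k*q" using pos_divide_less_eq[OF q] by blast
  also have "\<dots> \<longleftrightarrow> exp (ln c) < exp (q*k)" by (simp add: mult.commute)
  finally show ?thesis using c by simp
qed

lemma L2: fixes c q k :: real assumes c: "0 < c" and q: "0 < q" shows "k \<le> - ln c / q \<longleftrightarrow> c \<le> exp (-(q*k))"
proof -
  have "k \<le> (- ln c) / q \<longleftrightarrow> k*q \<le> - ln c" using pos_le_divide_eq[OF q] by blast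
  also have "\<dots> \<longleftrightarrow> ln c \<le> -(q*k)" by (simp add: mult.commute[of k q]; linarith)
  also have "\<dots> \<longleftrightarrow> exp (ln c) \<le> exp (-(q*k))" by simp
  finally show ?thesis using c by simp
qed

lemma L3: fixes c q k :: real assumes c: "0 < c" and q: "0 < q" shows "k \<le> ln c / q \<longleftrightarrow> exp (q*k) \<le> c"
  using L1[OF c q, of k] by (meson not_less)

lemma L4: fixes c q k :: real assumes c: "0 < c" and q: "0 < q" shows "- ln c / q < k \<longleftrightarrow> exp (-(q*k)) < c"
  using L2[OF c q, of k] by (meson not_le)

lemma Efam_rep:
  assumes q: "q > 0" and t: "t \<in> {-1/2..1/2}"
  shows "Efam q t \<phi> = (\<lambda>k. if EA q t k then fst \<phi> k else 0, \<lambda>k. if EB q t k then snd \<phi> k else 0)"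
proof (cases "t < 0")
  case True
  define a where "a = ln (-2*t) / q"
  have c: "0 < -2*t" using True by simp
  have a0: "a \<le> 0" unfolding a_def using t True q
    by (intro divide_nonpos_pos) auto
  have nA: "\<not> EA q t k" for k unfolding EA_def using True exp_gt_zero[of "q*k"] exp_gt_zero[of "-(q*k)"]
    by linarith
  have ma: "-a = - ln (-2*t) / q" by (simp add: a_def)
  have B: "EB q t k \<longleftrightarrow> a < k \<and> k \<le> -a" for k
    unfolding EB_def ma using L1[OF c q, of k] L2[OF c q, of k] unfolding a_def by linarith
  have e: "Efam q t \<phi> = opsub (P2 (ereal (-a))) (P2 (ereal a)) \<phi>"
    unfolding Efam_def ma using True by (simp add: a_def)
  show ?thesis
    unfolding e opsub_def dsub_def P2_def prod_eq_iff fst_conv snd_conv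
    using B a0 nA by (auto intro!: ext)
next
  case False
  show ?thesis
  proof (cases "t > 0")
    case True
    define a where "a = ln (2*t) / q"
    have c: "0 < 2*t" using True by simp
    have a0: "a \<le> 0" unfolding a_def using t True q
      by (intro divide_nonpos_pos) auto
    have ma: "-a = - ln (2*t) / q" by (simp add: a_def)
    have A: "EA q t k \<longleftrightarrow> k \<le> a \<or> -a < k" for k
      unfolding EA_def ma using L3[OF c q, of k] L4[OF c q, of k] unfolding a_def by linarith
    have B: "EB q t k" for k unfolding EB_def using True exp_gt_zero[of "q*k"] exp_gt_zero[of "-(q*k)"]
      by linarith
    have e: "Efam q t \<phi> = opadd (opsub (P1 (ereal a)) (P1 (ereal (-a)))) Iop \<phi>"
      unfolding Efam_def ma using True \<open>\<not> t < 0\<close> by (simp add: a_def)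
    show ?thesis
      unfolding e opadd_def opsub_def dsub_def dadd_def P1_def P2_def Iop_def prod_eq_iff fst_conv snd_conv
      using A a0 B by (auto intro!: ext)
  next
    case False
    with \<open>\<not> t < 0\<close> have t0: "t = 0" by simp
    have nA: "\<not> EA q t k" for k unfolding EA_def using t0 exp_gt_zero[of "q*k"] exp_gt_zero[of "-(q*k)"]
      by linarith
    have B: "EB q t k" for k unfolding EB_def using t0 exp_gt_zero[of "q*k"] exp_gt_zero[of "-(q*k)"]
      by linarith
    show ?thesis unfolding Efam_def P2_def prod_eq_iff fst_conv snd_conv using t0 nA B by (auto intro!: ext)
  qed
qed


lemma EA_min: "EA q (min t s) k \<longleftrightarrow> EA q t k \<and> EA q s k"
  unfolding EA_def min_def by auto

lemma EB_min: "EB q (min t s) k \<longleftrightarrow> EB q t k \<and> EB q s k"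
  unfolding EB_def min_def by auto

lemma EA_top: "q > 0 \<Longrightarrow> EA q (1/2) k"
  unfolding EA_def
proof -
  assume q: "q > 0"
  show "exp (q*k) \<le> 2*(1/2) \<or> exp (-(q*k)) < 2*(1/2)"
  proof (cases "k \<le> 0")
    case True
    then have "q*k \<le> 0" using q by (simp add: mult_nonneg_nonpos)
    then show ?thesis by simp
  next
    case False
    then have "-(q*k) < 0" using q by simp
    then show ?thesis by simp
  qed
qed

lemma EA_bot: "\<not> EA q (-1/2) k"
  unfolding EA_def using exp_gt_zero[of "q*k"] exp_gt_zero[of "-(q*k)"] by linarith

lemma EB_top: "EB q (1/2) k"
  unfolding EB_def using exp_gt_zero[of "q*k"] exp_gt_zero[of "-(q*k)"] by linarith

lemma EB_bot: "\<not> EB q (-1/2) k"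
proof
  assume "EB q (-1/2) k"
  then have "1 < exp (q*k)" "1 \<le> exp (-(q*k))" unfolding EB_def by auto
  then have "0 < q*k" "0 \<le> -(q*k)" by auto
  then show False by linarith
qed

definition Ng :: "real \<Rightarrow> dens \<Rightarrow> real \<Rightarrow> real" where
  "Ng q d k = S1 q k * (cmod (fst d k))\<^sup>2 + S2 q k * (cmod (snd d k))\<^sup>2"

lemma S1_nonneg: "q > 0 \<Longrightarrow> 0 \<le> S1 q k"
  unfolding S1_def by (intro divide_nonneg_nonneg) (auto simp: mult_nonneg_nonneg)

lemma S2_nonneg: "q > 0 \<Longrightarrow> 0 \<le> S2 q k"
  unfolding S2_def by (intro divide_nonneg_nonneg) (auto simp: add_nonneg_nonneg)

lemma S1_meas[measurable]: "S1 q \<in> borel_measurable lborel"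
  unfolding S1_def by measurable

lemma S2_meas[measurable]: "S2 q \<in> borel_measurable lborel"
  unfolding S2_def by measurable

lemma EA_meas: fixes f :: "real \<Rightarrow> complex" assumes [measurable]: "f \<in> borel_measurable borel"
  shows "(\<lambda>k. if EA q t k then f k else 0) \<in> borel_measurable borel"
  unfolding EA_def by measurable

lemma EB_meas: fixes f :: "real \<Rightarrow> complex" assumes [measurable]: "f \<in> borel_measurable borel"
  shows "(\<lambda>k. if EB q t k then f k else 0) \<in> borel_measurable borel"
  unfolding EB_def by measurable

lemma inK_Efam:
  assumes q: "q > 0" and t: "t \<in> {-1/2..1/2}" and K: "inK q \<phi>"
  shows "inK q (Efam q t \<phi>)"
proof -
  note m1[measurable] = K[unfolded inK_def, THEN conjunct1]
  note m2[measurable] = K[unfolded inK_def, THEN conjunct2, THEN conjunct1]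
  have i: "integrable lborel (Ng q \<phi>)" using K unfolding inK_def Ng_def by auto
  have ma: "(\<lambda>k. if EA q t k then fst \<phi> k else 0) \<in> borel_measurable lborel" using EA_meas[OF m1[unfolded measurable_lborel2], of q t] by simp
  have mb: "(\<lambda>k. if EB q t k then snd \<phi> k else 0) \<in> borel_measurable lborel" using EB_meas[OF m2[unfolded measurable_lborel2], of q t] by simp
  note [measurable] = ma mb
  have "integrable lborel (\<lambda>k. S1 q k * (cmod (if EA q t k then fst \<phi> k else 0))\<^sup>2
          + S2 q k * (cmod (if EB q t k then snd \<phi> k else 0))\<^sup>2)"
  proof (rule Bochner_Integration.integrable_bound[OF i])
    show "(\<lambda>k. S1 q k * (cmod (if EA q t k then fst \<phi> k else 0))\<^sup>2
          + S2 q k * (cmod (if EB q t k then snd \<phi> k else 0))\<^sup>2) \<in> borel_measurable lborel"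
      by measurable
    show "AE k in lborel. norm (S1 q k * (cmod (if EA q t k then fst \<phi> k else 0))\<^sup>2
          + S2 q k * (cmod (if EB q t k then snd \<phi> k else 0))\<^sup>2) \<le> norm (Ng q \<phi> k)"
    proof (rule AE_I2)
      fix k
      have s1: "0 \<le> S1 q k" and s2: "0 \<le> S2 q k" using S1_nonneg[OF q] S2_nonneg[OF q] by auto
      show "norm (S1 q k * (cmod (if EA q t k then fst \<phi> k else 0))\<^sup>2
          + S2 q k * (cmod (if EB q t k then snd \<phi> k else 0))\<^sup>2) \<le> norm (Ng q \<phi> k)"
        using s1 s2 unfolding Ng_def by (auto simp: mult_nonneg_nonneg add_nonneg_nonneg)
    qed
  qed
  then show ?thesis unfolding inK_def Efam_rep[OF q t] using ma mb by simp
qed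

lemma Kinner_sym:
  assumes q: "q > 0" and t: "t \<in> {-1/2..1/2}"
  shows "Kinner q (Efam q t \<psi>) \<phi> = Kinner q \<psi> (Efam q t \<phi>)"
  unfolding Kinner_def Efam_rep[OF q t] by (intro Bochner_Integration.integral_cong) auto

lemma ReKinner: "Re (Kinner q d d) = integral\<^sup>L lborel (Ng q d)"
proof -
  have "(\<lambda>k. complex_of_real (S1 q k) * fst d k * cnj (fst d k)
          + complex_of_real (S2 q k) * snd d k * cnj (snd d k)) = (\<lambda>k. complex_of_real (Ng q d k))"
    by (auto simp: Ng_def mult.assoc complex_norm_square[symmetric])
  then show ?thesis unfolding Kinner_def by simp
qed

lemma ev1:
  fixes f :: "'a \<Rightarrow> real"
  assumes "(f \<longlongrightarrow> s) F" "d \<noteq> s"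
  shows "eventually (\<lambda>i. (d < f i \<longleftrightarrow> d < s) \<and> (f i < d \<longleftrightarrow> s < d)) F"
proof (cases "d < s")
  case True
  show ?thesis using order_tendstoD(1)[OF assms(1) True] by eventually_elim (use True in auto)
next
  case False
  then have "s < d" using assms(2) by simp
  show ?thesis using order_tendstoD(2)[OF assms(1) \<open>s < d\<close>] by eventually_elim (use \<open>s < d\<close> in auto)
qed

lemma ev_thr:
  fixes f :: "'a \<Rightarrow> real"
  assumes "(f \<longlongrightarrow> s) F" "c \<noteq> 2* s" "c \<noteq> -2* s"
  shows "eventually (\<lambda>i. (c \<le> 2*f i \<longleftrightarrow> c \<le> 2* s) \<and> (c < 2*f i \<longleftrightarrow> c < 2* s) \<and>
      (-2*f i < c \<longleftrightarrow> -2* s < c) \<and> (-2*f i \<le> c \<longleftrightarrow> -2* s \<le> c)) F"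
proof -
  have a: "eventually (\<lambda>i. (c/2 < f i \<longleftrightarrow> c/2 < s) \<and> (f i < c/2 \<longleftrightarrow> s < c/2)) F"
    using assms by (intro ev1) auto
  have b: "eventually (\<lambda>i. (-c/2 < f i \<longleftrightarrow> -c/2 < s) \<and> (f i < -c/2 \<longleftrightarrow> s < -c/2)) F"
    using assms by (intro ev1) auto
  show ?thesis using a b
  proof eventually_elim
    case (elim i)
    then show ?case using assms(2,3) by (auto; linarith)
  qed
qed

lemma exp_eq_pt: fixes q k c :: real assumes q: "q > 0" shows
  "exp (q*k) = c \<Longrightarrow> k = ln c / q" and "exp (-(q*k)) = c \<Longrightarrow> k = - ln c / q"
proof -
  assume "exp (q*k) = c"
  then have "ln c = q*k" by auto
  then show "k = ln c / q" using q by simp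
next
  assume "exp (-(q*k)) = c"
  then have "ln c = -(q*k)" by auto
  then show "k = - ln c / q" using q by simp
qed

lemma cont_seq:
  assumes q: "q > 0" and K: "inK q \<phi>" and s: "s \<in> {-1/2..1/2}"
    and X: "\<And>i. X i \<in> {-1/2..1/2}" and lim: "X \<longlonglongrightarrow> s"
  shows "(\<lambda>i. Knorm q (dsub (Efam q (X i) \<phi>) (Efam q s \<phi>))) \<longlonglongrightarrow> 0"
proof -
  note m1[measurable] = K[unfolded inK_def, THEN conjunct1]
  note m2[measurable] = K[unfolded inK_def, THEN conjunct2, THEN conjunct1]
  have i: "integrable lborel (Ng q \<phi>)" using K unfolding inK_def Ng_def by auto
  define D where "D i = dsub (Efam q (X i) \<phi>) (Efam q s \<phi>)" for i
  have Dr: "D i = (\<lambda>k. (if EA q (X i) k then fst \<phi> k else 0) - (if EA q s k then fst \<phi> k else 0),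
                   \<lambda>k. (if EB q (X i) k then snd \<phi> k else 0) - (if EB q s k then snd \<phi> k else 0))" for i
    unfolding D_def dsub_def Efam_rep[OF q X] Efam_rep[OF q s] by simp
  have meas: "Ng q (D i) \<in> borel_measurable lborel" for i
  proof -
    note [measurable] = EA_meas[OF m1[unfolded measurable_lborel2], of q "X i"] EA_meas[OF m1[unfolded measurable_lborel2], of q s]
       EB_meas[OF m2[unfolded measurable_lborel2], of q "X i"] EB_meas[OF m2[unfolded measurable_lborel2], of q s]
    show ?thesis unfolding Ng_def Dr fst_conv snd_conv by measurable
  qed
  have bound: "AE k in lborel. norm (Ng q (D i) k) \<le> Ng q \<phi> k" for i
  proof (rule AE_I2)
    fix k
    have s1: "0 \<le> S1 q k" and s2: "0 \<le> S2 q k" using S1_nonneg[OF q] S2_nonneg[OF q] by auto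
    show "norm (Ng q (D i) k) \<le> Ng q \<phi> k"
      using s1 s2 unfolding Ng_def Dr by (auto simp: mult_nonneg_nonneg add_nonneg_nonneg)
  qed
  define N where "N = {ln (2* s) / q, ln (-2* s) / q, - ln (2* s) / q, - ln (-2* s) / q}"
  have Nnull: "N \<in> null_sets lborel" unfolding N_def by (rule finite_imp_null_set_lborel) simp
  have plim: "AE k in lborel. (\<lambda>i. Ng q (D i) k) \<longlonglongrightarrow> 0"
  proof (rule AE_I'[OF Nnull], safe)
    fix k assume nl: "\<not> (\<lambda>i. Ng q (D i) k) \<longlonglongrightarrow> 0"
    show "k \<in> N"
    proof (rule ccontr)
      assume kN: "k \<notin> N"
      have c1: "exp (q*k) \<noteq> 2 * s" "exp (q*k) \<noteq> -2 * s" "exp (-(q*k)) \<noteq> 2 * s" "exp (-(q*k)) \<noteq> -2 * s"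
      proof -
        show "exp (q*k) \<noteq> 2 * s"
        proof assume "exp (q*k) = 2 * s" then have "k = ln (2 * s) / q" by (rule exp_eq_pt(1)[OF q])
          with kN show False unfolding N_def by simp qed
        show "exp (q*k) \<noteq> -2 * s"
        proof assume "exp (q*k) = -2 * s" then have "k = ln (-2 * s) / q" by (rule exp_eq_pt(1)[OF q])
          with kN show False unfolding N_def by simp qed
        show "exp (-(q*k)) \<noteq> 2 * s"
        proof assume "exp (-(q*k)) = 2 * s" then have "k = - ln (2 * s) / q" by (rule exp_eq_pt(2)[OF q])
          with kN show False unfolding N_def by simp qed
        show "exp (-(q*k)) \<noteq> -2 * s"
        proof assume "exp (-(q*k)) = -2 * s" then have "k = - ln (-2 * s) / q" by (rule exp_eq_pt(2)[OF q])
          with kN show False unfolding N_def by simp qed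
      qed
      have e1: "eventually (\<lambda>i. (exp (q*k) \<le> 2*X i \<longleftrightarrow> exp (q*k) \<le> 2* s) \<and> (exp (q*k) < 2*X i \<longleftrightarrow> exp (q*k) < 2* s) \<and>
        (-2*X i < exp (q*k) \<longleftrightarrow> -2* s < exp (q*k)) \<and> (-2*X i \<le> exp (q*k) \<longleftrightarrow> -2* s \<le> exp (q*k))) sequentially"
        by (rule ev_thr[OF lim c1(1,2)])
      have e2: "eventually (\<lambda>i. (exp (-(q*k)) \<le> 2*X i \<longleftrightarrow> exp (-(q*k)) \<le> 2* s) \<and> (exp (-(q*k)) < 2*X i \<longleftrightarrow> exp (-(q*k)) < 2* s) \<and>
        (-2*X i < exp (-(q*k)) \<longleftrightarrow> -2* s < exp (-(q*k))) \<and> (-2*X i \<le> exp (-(q*k)) \<longleftrightarrow> -2* s \<le> exp (-(q*k)))) sequentially"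
        by (rule ev_thr[OF lim c1(3,4)])
      have "eventually (\<lambda>i. Ng q (D i) k = 0) sequentially"
        using e1 e2
      proof eventually_elim
        case (elim i)
        then have "EA q (X i) k \<longleftrightarrow> EA q s k" "EB q (X i) k \<longleftrightarrow> EB q s k"
          unfolding EA_def EB_def by blast+
        then show ?case unfolding Ng_def Dr by simp
      qed
      then have "(\<lambda>i. Ng q (D i) k) \<longlonglongrightarrow> 0" by (rule tendsto_eventually)
      with nl show False by simp
    qed
  qed
  have "(\<lambda>i. integral\<^sup>L lborel (Ng q (D i))) \<longlonglongrightarrow> integral\<^sup>L lborel (\<lambda>k. 0::real)"
    using integral_dominated_convergence[where f="\<lambda>k. 0" and s="\<lambda>i. Ng q (D i)" and M=lborel and w="Ng q \<phi>", OF _ meas i plim bound] by simp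
  then have "(\<lambda>i. sqrt (integral\<^sup>L lborel (Ng q (D i)))) \<longlonglongrightarrow> sqrt 0"
    by (intro tendsto_real_sqrt) simp
  then show ?thesis unfolding Knorm_def ReKinner D_def by simp
qed


lemma cont_within:
  assumes q: "q > 0" and K: "inK q \<phi>" and s: "s \<in> {-1/2..1/2}"
  shows "((\<lambda>t. Knorm q (dsub (Efam q t \<phi>) (Efam q s \<phi>))) \<longlongrightarrow> 0) (at s within {-1/2..1/2})"
  unfolding tendsto_at_iff_sequentially comp_def
proof (intro allI impI)
  fix X :: "nat \<Rightarrow> real" assume X: "\<forall>i. X i \<in> {-1/2..1/2} - {s}" and l: "X \<longlonglongrightarrow> s"
  show "(\<lambda>i. Knorm q (dsub (Efam q (X i) \<phi>) (Efam q s \<phi>))) \<longlonglongrightarrow> 0"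
    using X by (intro cont_seq[OF q K s _ l]) auto
qed

lemma cont_right:
  assumes q: "q > 0" and K: "inK q \<phi>" and s: "s \<in> {-1/2..<1/2}"
  shows "((\<lambda>t. Knorm q (dsub (Efam q t \<phi>) (Efam q s \<phi>))) \<longlongrightarrow> 0) (at_right s)"
  unfolding tendsto_at_iff_sequentially comp_def
proof (intro allI impI)
  fix X :: "nat \<Rightarrow> real" assume X: "\<forall>i. X i \<in> {s<..} - {s}" and l: "X \<longlonglongrightarrow> s"
  have s': "s \<in> {-1/2..1/2}" using s by auto
  have ev: "eventually (\<lambda>i. X i < 1/2) sequentially" using order_tendstoD(2)[OF l, of "1/2"] s by auto
  define Y where "Y i = (if X i \<in> {-1/2..1/2} then X i else s)" for i
  have Y: "Y i \<in> {-1/2..1/2}" for i unfolding Y_def using s' by auto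
  have evY: "eventually (\<lambda>i. X i = Y i) sequentially"
    using ev
  proof eventually_elim
    case (elim i)
    have "s < X i" using X by auto
    then show ?case using elim s unfolding Y_def by auto
  qed
  have lY: "Y \<longlonglongrightarrow> s" by (rule Lim_transform_eventually[OF l evY])
  have "(\<lambda>i. Knorm q (dsub (Efam q (Y i) \<phi>) (Efam q s \<phi>))) \<longlonglongrightarrow> 0"
    by (rule cont_seq[OF q K s' Y lY])
  moreover have "eventually (\<lambda>i. Knorm q (dsub (Efam q (Y i) \<phi>) (Efam q s \<phi>)) = Knorm q (dsub (Efam q (X i) \<phi>) (Efam q s \<phi>))) sequentially"
    using evY by eventually_elim (simp only:)
  ultimately show "(\<lambda>i. Knorm q (dsub (Efam q (X i) \<phi>) (Efam q s \<phi>))) \<longlonglongrightarrow> 0"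
    by (rule Lim_transform_eventually)
qed

theorem proposition4p3:
  fixes R r :: real
  assumes "R > 0" and "r > 0"
  defines "q \<equiv> q1 R r"
  shows
    \<comment> \<open>each E(t) is an orthogonal projection on K (linear, idempotent, self-adjoint)\<close>
    "(\<forall>t\<in>{-1/2..1/2}.
        (\<forall>\<phi>. inK q \<phi> \<longrightarrow> inK q (Efam q t \<phi>)) \<and>
        (\<forall>a \<psi> \<phi>. inK q \<psi> \<and> inK q \<phi> \<longrightarrow>
            Keq (Efam q t (dadd (dscale a \<psi>) \<phi>)) (dadd (dscale a (Efam q t \<psi>)) (Efam q t \<phi>))) \<and>
        (\<forall>\<phi>. inK q \<phi> \<longrightarrow> Keq (Efam q t (Efam q t \<phi>)) (Efam q t \<phi>)) \<and>
        (\<forall>\<psi> \<phi>. inK q \<psi> \<and> inK q \<phi> \<longrightarrow> Kinner q (Efam q t \<psi>) \<phi> = Kinner q \<psi> (Efam q t \<phi>)))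
   \<and> (\<forall>t\<in>{-1/2..1/2}. \<forall>s\<in>{-1/2..1/2}. \<forall>\<phi>. inK q \<phi> \<longrightarrow>
        Keq (Efam q t (Efam q s \<phi>)) (Efam q (min t s) \<phi>))
   \<and> (\<forall>s\<in>{-1/2..<1/2}. \<forall>\<phi>. inK q \<phi> \<longrightarrow>
        ((\<lambda>t. Knorm q (dsub (Efam q t \<phi>) (Efam q s \<phi>))) \<longlongrightarrow> 0) (at_right s))
   \<and> (\<forall>\<phi>. inK q \<phi> \<longrightarrow> Keq (Efam q (-1/2) \<phi>) dzero)
   \<and> (\<forall>\<phi>. inK q \<phi> \<longrightarrow> Keq (Efam q (1/2) \<phi>) (Iop \<phi>))
   \<and> (\<forall>f g. inK q f \<and> inK q g \<longrightarrow>
        RS_has_integral (\<lambda>t. 1) (\<lambda>t. Kinner q f (Efam q t g)) (-1/2) (1/2) (Kinner q f g))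
   \<and> (\<forall>s\<in>{-1/2..1/2}. \<forall>\<phi>. inK q \<phi> \<longrightarrow>
        ((\<lambda>t. Knorm q (dsub (Efam q t \<phi>) (Efam q s \<phi>))) \<longlongrightarrow> 0) (at s within {-1/2..1/2}))"
proof -
  have qp: "q > 0" unfolding q_def using assms(1,2) by (rule q_pos)
  have P1: "\<forall>t\<in>{-1/2..1/2}.
        (\<forall>\<phi>. inK q \<phi> \<longrightarrow> inK q (Efam q t \<phi>)) \<and>
        (\<forall>a \<psi> \<phi>. inK q \<psi> \<and> inK q \<phi> \<longrightarrow>
            Keq (Efam q t (dadd (dscale a \<psi>) \<phi>)) (dadd (dscale a (Efam q t \<psi>)) (Efam q t \<phi>))) \<and>
        (\<forall>\<phi>. inK q \<phi> \<longrightarrow> Keq (Efam q t (Efam q t \<phi>)) (Efam q t \<phi>)) \<and>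
        (\<forall>\<psi> \<phi>. inK q \<psi> \<and> inK q \<phi> \<longrightarrow> Kinner q (Efam q t \<psi>) \<phi> = Kinner q \<psi> (Efam q t \<phi>))"
  proof
    fix t :: real assume t: "t \<in> {-1/2..1/2}"
    show "(\<forall>\<phi>. inK q \<phi> \<longrightarrow> inK q (Efam q t \<phi>)) \<and>
        (\<forall>a \<psi> \<phi>. inK q \<psi> \<and> inK q \<phi> \<longrightarrow>
            Keq (Efam q t (dadd (dscale a \<psi>) \<phi>)) (dadd (dscale a (Efam q t \<psi>)) (Efam q t \<phi>))) \<and>
        (\<forall>\<phi>. inK q \<phi> \<longrightarrow> Keq (Efam q t (Efam q t \<phi>)) (Efam q t \<phi>)) \<and>
        (\<forall>\<psi> \<phi>. inK q \<psi> \<and> inK q \<phi> \<longrightarrow> Kinner q (Efam q t \<psi>) \<phi> = Kinner q \<psi> (Efam q t \<phi>))"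
    proof (intro conjI allI impI)
      fix \<phi> assume "inK q \<phi>" then show "inK q (Efam q t \<phi>)" by (rule inK_Efam[OF qp t])
    next
      fix a \<psi> \<phi>
      show "Keq (Efam q t (dadd (dscale a \<psi>) \<phi>)) (dadd (dscale a (Efam q t \<psi>)) (Efam q t \<phi>))"
        unfolding Keq_def Efam_rep[OF qp t] dadd_def dscale_def by (intro AE_I2) simp
    next
      fix \<phi>
      show "Keq (Efam q t (Efam q t \<phi>)) (Efam q t \<phi>)"
        unfolding Keq_def Efam_rep[OF qp t] by (intro AE_I2) simp
    next
      fix \<psi> \<phi>
      show "Kinner q (Efam q t \<psi>) \<phi> = Kinner q \<psi> (Efam q t \<phi>)" by (rule Kinner_sym[OF qp t])
    qed
  qed
  have P2: "\<forall>t\<in>{-1/2..1/2}. \<forall>s\<in>{-1/2..1/2}. \<forall>\<phi>. inK q \<phi> \<longrightarrow>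
        Keq (Efam q t (Efam q s \<phi>)) (Efam q (min t s) \<phi>)"
  proof (intro ballI allI impI)
    fix t s :: real and \<phi> assume t: "t \<in> {-1/2..1/2}" and s: "s \<in> {-1/2..1/2}"
    have m: "min t s \<in> {-1/2..1/2}" using t s by auto
    show "Keq (Efam q t (Efam q s \<phi>)) (Efam q (min t s) \<phi>)"
      unfolding Keq_def Efam_rep[OF qp t] Efam_rep[OF qp s] Efam_rep[OF qp m] EA_min EB_min
      by (auto intro!: AE_I2)
  qed
  have bot: "Efam q (-1/2) \<phi> = (\<lambda>k. 0, \<lambda>k. 0)" for \<phi>
  proof -
    have hb: "-1/2 \<in> {-1/2..1/2::real}" by simp
    have nb: "\<not> EA q (-1/2) k" "\<not> EB q (-1/2) k" for k using EA_bot EB_bot by auto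
    show ?thesis unfolding Efam_rep[OF qp hb] using nb by auto
  qed
  have top: "Efam q (1/2) \<phi> = \<phi>" for \<phi>
    using Efam_rep[OF qp, of "1/2" \<phi>] by (simp add: EA_top[OF qp] EB_top)
  have P4: "\<forall>\<phi>. inK q \<phi> \<longrightarrow> Keq (Efam q (-1/2) \<phi>) dzero"
    unfolding bot Keq_def dzero_def by simp
  have P5: "\<forall>\<phi>. inK q \<phi> \<longrightarrow> Keq (Efam q (1/2) \<phi>) (Iop \<phi>)"
    unfolding top Keq_def Iop_def opadd_def dadd_def P1_def P2_def by simp
  have P6: "\<forall>f g. inK q f \<and> inK q g \<longrightarrow>
        RS_has_integral (\<lambda>t. 1) (\<lambda>t. Kinner q f (Efam q t g)) (-1/2) (1/2) (Kinner q f g)"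
  proof (intro allI impI)
    fix f g
    define F where "F t = Kinner q f (Efam q t g)" for t
    have F1: "F (1/2) = Kinner q f g" unfolding F_def top ..
    have F0: "F (-1/2) = 0" unfolding F_def bot Kinner_def by simp
    show "RS_has_integral (\<lambda>t. 1) (\<lambda>t. Kinner q f (Efam q t g)) (-1/2) (1/2) (Kinner q f g)"
      unfolding RS_has_integral_def
    proof (intro allI impI)
      fix \<epsilon> :: real assume e: "\<epsilon> > 0"
      show "\<exists>\<delta>>0. \<forall>(n::nat) (x::nat \<Rightarrow> real) (\<xi>::nat \<Rightarrow> real).
       x 0 = -1/2 \<and> x n = 1/2 \<and>
       (\<forall>i<n. x i < x (Suc i) \<and> x (Suc i) - x i < \<delta> \<and> x i \<le> \<xi> i \<and> \<xi> i \<le> x (Suc i)) \<longrightarrow>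
       cmod ((\<Sum>i<n. 1 * (Kinner q f (Efam q (x (Suc i)) g) - Kinner q f (Efam q (x i) g))) - Kinner q f g) < \<epsilon>"
      proof (intro exI[of _ 1] conjI allI impI)
        fix n :: nat and x \<xi> :: "nat \<Rightarrow> real"
        assume h: "x 0 = -1/2 \<and> x n = 1/2 \<and>
       (\<forall>i<n. x i < x (Suc i) \<and> x (Suc i) - x i < 1 \<and> x i \<le> \<xi> i \<and> \<xi> i \<le> x (Suc i))"
        have "(\<Sum>i<n. 1 * (Kinner q f (Efam q (x (Suc i)) g) - Kinner q f (Efam q (x i) g)))
            = (\<Sum>i<n. F (x (Suc i)) - F (x i))" unfolding F_def by simp
        also have "\<dots> = F (x n) - F (x 0)" by (rule sum_lessThan_telescope)
        also have "\<dots> = F (1/2) - F (-1/2)" using h[THEN conjunct1] h[THEN conjunct2, THEN conjunct1] by (simp only:)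
        also have "\<dots> = Kinner q f g" using F1 F0 by simp
        finally show "cmod ((\<Sum>i<n. 1 * (Kinner q f (Efam q (x (Suc i)) g) - Kinner q f (Efam q (x i) g))) - Kinner q f g) < \<epsilon>"
          using e by simp
      qed simp
    qed
  qed
  have P3: "\<forall>s\<in>{-1/2..<1/2}. \<forall>\<phi>. inK q \<phi> \<longrightarrow>
        ((\<lambda>t. Knorm q (dsub (Efam q t \<phi>) (Efam q s \<phi>))) \<longlongrightarrow> 0) (at_right s)"
    using cont_right[OF qp] by blast
  have P7: "\<forall>s\<in>{-1/2..1/2}. \<forall>\<phi>. inK q \<phi> \<longrightarrow>
        ((\<lambda>t. Knorm q (dsub (Efam q t \<phi>) (Efam q s \<phi>))) \<longlongrightarrow> 0) (at s within {-1/2..1/2})"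
    using cont_within[OF qp] by blast
  show ?thesis
    by (intro conjI P1 P2 P3 P4 P5 P6 P7)
qed

end
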